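(* Let $\mathcal{A}$ be an associative unital algebra over $\mathbb{C}$ and let $B=(B_{ij})_{1\le i,j\le g}$ be a $g\times g$ matrix with entries in $\mathcal{A}$ such that entries in different rows commute: $[B_{ik},B_{jl}]=0$ whenever $i\neq j$ (for all $k,l$). Let $D\in\mathcal A$ be the determinant of $B$ and $\Delta_{ij}\in\mathcal A$ the signed cofactor of $B_{ij}$ (defined below). Assume $D$ is invertible in $\mathcal{A}$ and that $B$ is invertible in $\mathrm{Mat}_g(\mathcal{A})$. Then the inverse is given by $(B^{-1})_{ij}=D^{-1}\Delta_{ji}$, and elements in the same column of $B^{-1}$ commute: $$[(B^{-1})_{ir},(B^{-1})_{jr}]=0\qquad\text{for all } i,j,r\in\{1,\dots,g\}.$$ Equivalently, $\Delta_{ri}D^{-1}\Delta_{rj}=\Delta_{rj}D^{-1}\Delta_{ri}$ for all $i,j,r$.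
   Context: Because entries of $B$ lying in different rows commute, the determinant $D=\sum_{\sigma\in S_g}\mathrm{sgn}(\sigma)\,B_{1\sigma(1)}B_{2\sigma(2)}\cdots B_{g\sigma(g)}$ is independent of the order of the factors in each product. Likewise the cofactor $\Delta_{ij}$ is $(-1)^{i+j}$ times the determinant (defined the same way) of the $(g-1)\times(g-1)$ matrix obtained from $B$ by deleting row $i$ and column $j$; it is also well defined. *)

theory Defs
  imports Complex_Main "HOL-Combinatorics.Permutations"
begin

text \<open>Matrices of size g over a (possibly noncommutative) ring are functions
  nat \<Rightarrow> nat \<Rightarrow> 'a, indices ranging over {0..<g} (the paper uses 1..g).\<close>

definition rdet :: "nat \<Rightarrow> (nat \<Rightarrow> nat \<Rightarrow> 'a::ring_1) \<Rightarrow> 'a" where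
  "rdet g B = (\<Sum>\<sigma>\<in>{\<sigma>. \<sigma> permutes {..<g}}.
      of_int (sign \<sigma>) * prod_list (map (\<lambda>i. B i (\<sigma> i)) [0..<g]))"

definition minor :: "(nat \<Rightarrow> nat \<Rightarrow> 'a) \<Rightarrow> nat \<Rightarrow> nat \<Rightarrow> nat \<Rightarrow> nat \<Rightarrow> 'a" where
  "minor B i j k l = B (if k < i then k else Suc k) (if l < j then l else Suc l)"

definition cofactor :: "nat \<Rightarrow> (nat \<Rightarrow> nat \<Rightarrow> 'a::ring_1) \<Rightarrow> nat \<Rightarrow> nat \<Rightarrow> 'a" where
  "cofactor g B i j = (-1) ^ (i + j) * rdet (g - 1) (minor B i j)"

definition matmul :: "nat \<Rightarrow> (nat \<Rightarrow> nat \<Rightarrow> 'a::ring_1) \<Rightarrow> (nat \<Rightarrow> nat \<Rightarrow> 'a) \<Rightarrow> nat \<Rightarrow> nat \<Rightarrow> 'a" where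
  "matmul g B C i j = (\<Sum>k<g. B i k * C k j)"

definition idmat :: "nat \<Rightarrow> nat \<Rightarrow> 'a::ring_1" where
  "idmat i j = (if i = j then 1 else 0)"

text \<open>A unital associative C-algebra structure on a ring: a unital ring
  homomorphism from C into the centre.\<close>
definition complex_algebra_hom :: "(complex \<Rightarrow> 'a::ring_1) \<Rightarrow> bool" where
  "complex_algebra_hom \<phi> \<longleftrightarrow>
     (\<forall>a b. \<phi> (a + b) = \<phi> a + \<phi> b) \<and> (\<forall>a b. \<phi> (a * b) = \<phi> a * \<phi> b) \<and>
     \<phi> 1 = 1 \<and> (\<forall>c x. \<phi> c * x = x * \<phi> c)"

end

theory Submission
  imports Defs "Jordan_Normal_Form.Determinant"
begin

hide_const (open) Determinant.cofactor

lemma prod_list_zero_mem: "(0::'a::ring_1) \<in> set xs \<Longrightarrow> prod_list xs = 0"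
  by (induction xs) auto

lemma prod_list_comm:
  assumes "\<And>y. y \<in> set ys \<Longrightarrow> x * y = y * (x::'a::monoid_mult)"
  shows "x * prod_list ys = prod_list ys * x"
  using assms
proof (induction ys)
  case Nil then show ?case by simp
next
  case (Cons a ys)
  have "x * prod_list (a # ys) = (x * a) * prod_list ys" by (simp add: mult.assoc)
  also have "\<dots> = a * (x * prod_list ys)" using Cons.prems by (simp add: mult.assoc)
  also have "\<dots> = a * (prod_list ys * x)" using Cons by simp
  finally show ?case by (simp add: mult.assoc)
qed

lemma upt_split3: "s < n \<Longrightarrow> [0..<n] = [0..<s] @ s # [Suc s..<n]"
  by (metis le0 less_imp_le upt_add_eq_append upt_conv_Cons add_0 le_add_diff_inverse)

lemma map_insert_index_upt: "s \<le> n \<Longrightarrow> map (insert_index s) [0..<n] = [0..<s] @ [Suc s..<Suc n]"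
proof -
  assume "s \<le> n"
  then have "[0..<n] = [0..<s] @ [s..<n]"
    by (metis le0 upt_add_eq_append add_0 le_add_diff_inverse)
  moreover have "map (insert_index s) [0..<s] = [0..<s]"
    by (auto simp: insert_index_def intro: map_idI)
  moreover have "map (insert_index s) [s..<n] = map Suc [s..<n]"
    by (auto simp: insert_index_def)
  ultimately show ?thesis by (simp add: map_Suc_upt)
qed

lemma perm_insert_at_insert_index:
  "permutation_insert s i q (insert_index s k) = insert_index i (q k)"
  unfolding permutation_insert_expand insert_index_def by auto

lemma sum_swap_mult:
  fixes a :: "nat \<Rightarrow> 'a::ring_1"
  shows "(\<Sum>s<g. a s * (\<Sum>k<g. b s k * c k)) = (\<Sum>k<g. (\<Sum>s<g. a s * b s k) * c k)"
proof -
  have "(\<Sum>s<g. a s * (\<Sum>k<g. b s k * c k)) = (\<Sum>s<g. \<Sum>k<g. a s * b s k * c k)"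
    by (simp add: sum_distrib_left mult.assoc)
  also have "\<dots> = (\<Sum>k<g. \<Sum>s<g. a s * b s k * c k)" by (rule sum.swap)
  also have "\<dots> = (\<Sum>k<g. (\<Sum>s<g. a s * b s k) * c k)" by (simp add: sum_distrib_right)
  finally show ?thesis .
qed

lemma sum_if_mult:
  fixes a :: "'a::ring_1" and g :: nat
  assumes "i < g"
  shows "(\<Sum>k<g. (if i = k then a else 0) * c k) = a * c i"
proof -
  have "(\<Sum>k<g. (if i = k then a else 0) * c k) = (\<Sum>k<g. if k = i then a * c k else 0)"
    by (rule sum.cong) auto
  also have "\<dots> = a * c i" using assms by (subst sum.delta) auto
  finally show ?thesis .
qed

lemma minor_alt: "minor B i j k l = B (insert_index i k) (insert_index j l)"
  by (simp add: minor_def insert_index_def)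

lemma cof_expand:
  fixes M :: "nat \<Rightarrow> nat \<Rightarrow> 'a::ring_1"
  assumes s: "s < Suc n" and i: "i < Suc n"
    and comm: "\<And>t l. t < Suc n \<Longrightarrow> l < Suc n \<Longrightarrow> t \<noteq> s \<Longrightarrow> x * M t l = M t l * x"
  shows "cofactor (Suc n) M s i * x =
    (\<Sum>\<sigma>\<in>{\<sigma>. \<sigma> permutes {..<Suc n}}. if \<sigma> s = i then of_int (sign \<sigma>) *
        prod_list (map (\<lambda>t. if t = s then x else M t (\<sigma> t)) [0..<Suc n]) else 0)"
proof -
  define P where "P = (\<lambda>\<sigma>. of_int (sign \<sigma>) *
        prod_list (map (\<lambda>t. if t = s then x else M t (\<sigma> t)) [0..<Suc n]) :: 'a)"
  have fin: "finite {\<sigma>. \<sigma> permutes {..<Suc n}}" by (simp add: finite_permutations)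
  have "(\<Sum>\<sigma>\<in>{\<sigma>. \<sigma> permutes {..<Suc n}}. if \<sigma> s = i then P \<sigma> else 0)
      = (\<Sum>\<sigma>\<in>{\<sigma>\<in>{\<sigma>. \<sigma> permutes {..<Suc n}}. \<sigma> s = i}. P \<sigma>)"
    by (rule sum.inter_filter[OF fin, symmetric])
  also have "{\<sigma>\<in>{\<sigma>. \<sigma> permutes {..<Suc n}}. \<sigma> s = i} = permutation_insert s i ` {q. q permutes {0..<n}}"
    using permutation_fix[OF s i] by (simp add: atLeast0LessThan)
  also have "(\<Sum>\<sigma>\<in>permutation_insert s i ` {q. q permutes {0..<n}}. P \<sigma>)
      = (\<Sum>q\<in>{q. q permutes {0..<n}}. P (permutation_insert s i q))"
    by (rule sum.reindex[OF permutation_insert_inj_on[OF s i], unfolded comp_def])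
  also have "\<dots> = (\<Sum>q\<in>{q. q permutes {0..<n}}. (-1) ^ (s + i) * of_int (sign q) *
        prod_list (map (\<lambda>k. minor M s i k (q k)) [0..<n]) * x)"
  proof (rule sum.cong[OF refl])
    fix q assume "q \<in> {q. q permutes {0..<n}}"
    then have q: "q permutes {0..<n}" by simp
    let ?p = "permutation_insert s i q"
    have pp: "?p permutes {0..<Suc n}" by (rule permutation_insert_permutes[OF q s i])
    define f where "f = (\<lambda>t. M t (?p t))"
    have sn: "s \<le> n" using s by simp
    have "map (\<lambda>t. if t = s then x else M t (?p t)) [0..<Suc n]
        = map f [0..<s] @ x # map f [Suc s..<Suc n]"
      by (subst upt_split3[OF s]) (auto simp: f_def)
    then have "prod_list (map (\<lambda>t. if t = s then x else M t (?p t)) [0..<Suc n])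
        = prod_list (map f [0..<s]) * (x * prod_list (map f [Suc s..<Suc n]))"
      by (simp add: mult.assoc)
    also have "x * prod_list (map f [Suc s..<Suc n]) = prod_list (map f [Suc s..<Suc n]) * x"
    proof (rule prod_list_comm)
      fix y assume "y \<in> set (map f [Suc s..<Suc n])"
      then obtain t where t: "Suc s \<le> t" "t < Suc n" and y: "y = M t (?p t)"
        by (auto simp: f_def)
      have "?p t < Suc n" using pp t permutes_in_image by fastforce
      then show "x * y = y * x" using comm[of t "?p t"] t y by simp
    qed
    also have "prod_list (map f [0..<s]) * (prod_list (map f [Suc s..<Suc n]) * x)
        = prod_list (map f (map (insert_index s) [0..<n])) * x"
      by (simp add: map_insert_index_upt[OF sn] mult.assoc)
    also have "map f (map (insert_index s) [0..<n]) = map (\<lambda>k. minor M s i k (q k)) [0..<n]"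
      by (simp add: f_def perm_insert_at_insert_index minor_alt)
    finally have pr: "prod_list (map (\<lambda>t. if t = s then x else M t (?p t)) [0..<Suc n])
        = prod_list (map (\<lambda>k. minor M s i k (q k)) [0..<n]) * x" .
    have sg: "(of_int (sign ?p) :: 'a) = (-1) ^ (s + i) * of_int (sign q)"
      by (rule signof_permutation_insert[OF q s i])
    show "P ?p = (-1) ^ (s + i) * of_int (sign q) *
        prod_list (map (\<lambda>k. minor M s i k (q k)) [0..<n]) * x"
      unfolding P_def pr sg by (simp add: mult.assoc)
  qed
  also have "\<dots> = cofactor (Suc n) M s i * x"
    unfolding Defs.cofactor_def rdet_def
    by (simp add: sum_distrib_left sum_distrib_right mult.assoc atLeast0LessThan)
  finally show ?thesis unfolding P_def by simp
qed

lemma rdet_eq_cols: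
  fixes M :: "nat \<Rightarrow> nat \<Rightarrow> 'a::ring_1"
  assumes ik: "i \<noteq> k" and i: "i < g" and k: "k < g" and eq: "\<And>t. M t i = M t k"
  shows "rdet g M = 0"
proof -
  define \<tau> where "\<tau> = Transposition.transpose i k"
  define P where "P = {\<sigma>. \<sigma> permutes {..<g}}"
  define E where "E = {\<sigma>\<in>P. evenperm \<sigma>}"
  define Od where "Od = {\<sigma>\<in>P. \<not> evenperm \<sigma>}"
  define F where "F = (\<lambda>\<sigma>. of_int (sign \<sigma>) * prod_list (map (\<lambda>t. M t (\<sigma> t)) [0..<g]) :: 'a)"
  have finP: "finite P" unfolding P_def by (simp add: finite_permutations)
  have tauP: "\<tau> permutes {..<g}" unfolding \<tau>_def using i k by (intro permutes_swap_id) auto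
  have Mt: "M t (\<tau> l) = M t l" for t l
    unfolding \<tau>_def using eq by (cases "l = i"; cases "l = k") auto
  have Fneg: "F (\<tau> \<circ> \<sigma>) = - F \<sigma>" if "\<sigma> \<in> P" for \<sigma>
  proof -
    have "permutation \<sigma>" using that unfolding P_def
      by (auto simp: permutation_permutes)
    moreover have "permutation \<tau>" using tauP by (auto simp: permutation_permutes)
    ultimately have "sign (\<tau> \<circ> \<sigma>) = sign \<tau> * sign \<sigma>" by (simp add: sign_compose)
    also have "sign \<tau> = -1" unfolding \<tau>_def using ik by (simp add: sign_swap_id)
    finally have "sign (\<tau> \<circ> \<sigma>) = - sign \<sigma>" by (simp add: o_def)
    then show ?thesis unfolding F_def by (simp add: Mt)
  qed
  have PEO: "P = E \<union> Od" "E \<inter> Od = {}" unfolding E_def Od_def by auto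
  have "rdet g M = sum F P" unfolding rdet_def F_def P_def by simp
  also have "\<dots> = sum F E + sum F Od"
    unfolding PEO(1) by (rule sum.union_disjoint) (use finP PEO in auto)
  also have "Od = (\<lambda>\<sigma>. \<tau> \<circ> \<sigma>) ` E"
  proof
    show "Od \<subseteq> (\<lambda>\<sigma>. \<tau> \<circ> \<sigma>) ` E"
    proof
      fix \<sigma> assume s: "\<sigma> \<in> Od"
      then have sP: "\<sigma> permutes {..<g}" unfolding Od_def P_def by auto
      have ps: "permutation \<sigma>" "permutation \<tau>" using sP tauP by (auto simp: permutation_permutes)
      have "\<tau> \<circ> \<sigma> \<in> E" using s ps permutes_compose[OF sP tauP] unfolding E_def Od_def P_def \<tau>_def
        by (auto simp: evenperm_comp evenperm_swap ik)
      moreover have "\<sigma> = \<tau> \<circ> (\<tau> \<circ> \<sigma>)" unfolding \<tau>_def by (simp flip: comp_assoc)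
      ultimately show "\<sigma> \<in> (\<lambda>\<sigma>. \<tau> \<circ> \<sigma>) ` E" by blast
    qed
    show "(\<lambda>\<sigma>. \<tau> \<circ> \<sigma>) ` E \<subseteq> Od"
    proof
      fix \<rho> assume "\<rho> \<in> (\<lambda>\<sigma>. \<tau> \<circ> \<sigma>) ` E"
      then obtain \<sigma> where s: "\<sigma> \<in> E" and r: "\<rho> = \<tau> \<circ> \<sigma>" by auto
      then have sP: "\<sigma> permutes {..<g}" unfolding E_def P_def by auto
      have ps: "permutation \<sigma>" "permutation \<tau>" using sP tauP by (auto simp: permutation_permutes)
      show "\<rho> \<in> Od" using s ps permutes_compose[OF sP tauP] unfolding r E_def Od_def P_def \<tau>_def
        by (auto simp: evenperm_comp evenperm_swap ik)
    qed
  qed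
  also have "sum F ((\<lambda>\<sigma>. \<tau> \<circ> \<sigma>) ` E) = sum (\<lambda>\<sigma>. F (\<tau> \<circ> \<sigma>)) E"
  proof (rule sum.reindex[unfolded comp_def])
    show "inj_on (\<lambda>\<sigma>. \<tau> \<circ> \<sigma>) E"
    proof
      fix a b assume "\<tau> \<circ> a = \<tau> \<circ> b"
      then have "\<tau> \<circ> (\<tau> \<circ> a) = \<tau> \<circ> (\<tau> \<circ> b)" by simp
      then show "a = b" unfolding \<tau>_def by (simp flip: comp_assoc)
    qed
  qed
  also have "\<dots> = sum (\<lambda>\<sigma>. - F \<sigma>) E"
    by (rule sum.cong[OF refl]) (auto simp: E_def Fneg)
  finally show ?thesis by (simp add: sum_negf)
qed

lemma col_expand:
  fixes M :: "nat \<Rightarrow> nat \<Rightarrow> 'a::ring_1"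
  assumes rc: "\<And>t u k l. t < g \<Longrightarrow> u < g \<Longrightarrow> k < g \<Longrightarrow> l < g \<Longrightarrow> t \<noteq> u \<Longrightarrow>
                 M t k * M u l = M u l * M t k"
    and i: "i < g" and k: "k < g"
  shows "(\<Sum>s<g. cofactor g M s i * M s k) = (if i = k then rdet g M else 0)"
proof -
  obtain n where g: "g = Suc n" using i by (cases g) auto
  define Mt where "Mt = (\<lambda>t l. if l = i then M t k else M t l)"
  define P where "P = {\<sigma>. \<sigma> permutes {..<g}}"
  define Gt where "Gt = (\<lambda>s \<sigma>. if \<sigma> s = i then of_int (sign \<sigma>) *
        prod_list (map (\<lambda>t. if t = s then M s k else M t (\<sigma> t)) [0..<g]) else (0::'a))"
  have "(\<Sum>s<g. cofactor g M s i * M s k) = (\<Sum>s<g. \<Sum>\<sigma>\<in>P. Gt s \<sigma>)"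
  proof (rule sum.cong[OF refl])
    fix s assume "s \<in> {..<g}"
    then have s: "s < Suc n" using g by simp
    show "cofactor g M s i * M s k = (\<Sum>\<sigma>\<in>P. Gt s \<sigma>)"
      unfolding g P_def Gt_def
      by (rule cof_expand[OF s i[unfolded g]]) (use rc s k g in auto)
  qed
  also have "\<dots> = (\<Sum>\<sigma>\<in>P. \<Sum>s<g. Gt s \<sigma>)" by (rule sum.swap)
  also have "\<dots> = (\<Sum>\<sigma>\<in>P. of_int (sign \<sigma>) * prod_list (map (\<lambda>t. Mt t (\<sigma> t)) [0..<g]))"
  proof (rule sum.cong[OF refl])
    fix \<sigma> assume "\<sigma> \<in> P"
    then have sp: "\<sigma> permutes {..<g}" unfolding P_def by simp
    obtain s0 where s0: "\<sigma> s0 = i" and s0g: "s0 < g"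
      using permutes_image[OF sp] i by (metis imageE lessThan_iff)
    have iff: "\<sigma> s = i \<longleftrightarrow> s = s0" for s using s0 permutes_inj[OF sp] by (auto dest: injD)
    have "(\<Sum>s<g. Gt s \<sigma>) = (\<Sum>s<g. if s = s0 then of_int (sign \<sigma>) *
        prod_list (map (\<lambda>t. if t = s0 then M s0 k else M t (\<sigma> t)) [0..<g]) else 0)"
      unfolding Gt_def by (rule sum.cong[OF refl]) (auto simp: iff)
    also have "\<dots> = of_int (sign \<sigma>) *
        prod_list (map (\<lambda>t. if t = s0 then M s0 k else M t (\<sigma> t)) [0..<g])"
      using s0g by simp
    also have "map (\<lambda>t. if t = s0 then M s0 k else M t (\<sigma> t)) [0..<g] = map (\<lambda>t. Mt t (\<sigma> t)) [0..<g]"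
      unfolding Mt_def by (rule map_cong[OF refl]) (auto simp: iff s0)
    finally show "(\<Sum>s<g. Gt s \<sigma>) = of_int (sign \<sigma>) * prod_list (map (\<lambda>t. Mt t (\<sigma> t)) [0..<g])" .
  qed
  also have "\<dots> = rdet g Mt" unfolding rdet_def P_def by simp
  also have "\<dots> = (if i = k then rdet g M else 0)"
  proof (cases "i = k")
    case True
    then have "Mt = M" unfolding Mt_def by (auto intro!: ext)
    then show ?thesis using True by simp
  next
    case False
    have "rdet g Mt = 0" by (rule rdet_eq_cols[OF False i k]) (use False in \<open>auto simp: Mt_def\<close>)
    then show ?thesis using False by simp
  qed
  finally show ?thesis .
qed

theorem mainTheorem2:
  fixes \<phi> :: "complex \<Rightarrow> 'a::ring_1"
    and g :: nat
    and B C :: "nat \<Rightarrow> nat \<Rightarrow> 'a"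
    and Dinv :: 'a
  assumes alg: "complex_algebra_hom \<phi>"
    and rows_commute: "\<And>i j k l. i < g \<Longrightarrow> j < g \<Longrightarrow> k < g \<Longrightarrow> l < g \<Longrightarrow> i \<noteq> j \<Longrightarrow>
                          B i k * B j l = B j l * B i k"
    and D_inv: "rdet g B * Dinv = 1" "Dinv * rdet g B = 1"
    and B_inv: "\<And>i j. i < g \<Longrightarrow> j < g \<Longrightarrow> matmul g B C i j = idmat i j"
               "\<And>i j. i < g \<Longrightarrow> j < g \<Longrightarrow> matmul g C B i j = idmat i j"
  shows "(\<forall>i<g. \<forall>j<g. C i j = Dinv * cofactor g B j i)
       \<and> (\<forall>i<g. \<forall>j<g. \<forall>r<g. C i r * C j r = C j r * C i r)
       \<and> (\<forall>i<g. \<forall>j<g. \<forall>r<g. cofactor g B r i * Dinv * cofactor g B r j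
                             = cofactor g B r j * Dinv * cofactor g B r i)"
proof -
  define \<Delta> where "\<Delta> = cofactor g B"
  define D where "D = rdet g B"
  have rcB: "\<And>t u k l. t < g \<Longrightarrow> u < g \<Longrightarrow> k < g \<Longrightarrow> l < g \<Longrightarrow> t \<noteq> u \<Longrightarrow>
                 B t k * B u l = B u l * B t k" using rows_commute by blast
  have P1: "C i j = Dinv * \<Delta> j i" if i: "i < g" and j: "j < g" for i j
  proof -
    have "\<Delta> j i = (\<Sum>s<g. \<Delta> s i * idmat s j)"
      using j by (simp add: idmat_def if_distrib cong: if_cong)
    also have "\<dots> = (\<Sum>s<g. \<Delta> s i * (\<Sum>k<g. B s k * C k j))"
      using B_inv(1) j by (simp add: matmul_def)
    also have "\<dots> = (\<Sum>k<g. (\<Sum>s<g. \<Delta> s i * B s k) * C k j)"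
      by (rule sum_swap_mult)
    also have "\<dots> = (\<Sum>k<g. (if i = k then D else 0) * C k j)"
    proof (rule sum.cong[OF refl])
      fix k assume "k \<in> {..<g}"
      then have k: "k < g" by simp
      show "(\<Sum>s<g. \<Delta> s i * B s k) * C k j = (if i = k then D else 0) * C k j"
        using col_expand[where M=B, OF rcB i k] unfolding \<Delta>_def D_def by simp
    qed
    also have "\<dots> = D * C i j" using i by (rule sum_if_mult)
    finally have "D * C i j = \<Delta> j i" by simp
    then have "Dinv * (D * C i j) = Dinv * \<Delta> j i" by simp
    then show ?thesis using D_inv(2) by (simp add: D_def flip: mult.assoc)
  qed
  have P3: "\<Delta> r i * C j r = \<Delta> r j * C i r" if r: "r < g" and i: "i < g" and j: "j < g" for r i j
  proof -
    define M where "M = (\<lambda>t l. if t = r then idmat j l else B t l)"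
    have rcM: "\<And>t u k l. t < g \<Longrightarrow> u < g \<Longrightarrow> k < g \<Longrightarrow> l < g \<Longrightarrow> t \<noteq> u \<Longrightarrow>
                 M t k * M u l = M u l * M t k"
      unfolding M_def using rcB by (auto simp: idmat_def)
    have minorM: "minor M r l = minor B r l" for l
      by (auto simp: minor_def M_def intro!: ext)
    have cofM: "cofactor g M r l = \<Delta> r l" for l
      by (simp add: Defs.cofactor_def \<Delta>_def minorM)
    have inner: "(\<Sum>k<g. M s k * C k r) = (if s = r then C j r else 0)" if s: "s < g" for s
    proof (cases "s = r")
      case True
      have "(\<Sum>k<g. M s k * C k r) = (\<Sum>k<g. (if j = k then 1 else 0) * C k r)"
        using True by (simp add: M_def idmat_def)
      also have "\<dots> = 1 * C j r" using j by (rule sum_if_mult)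
      finally show ?thesis using True by simp
    next
      case False
      have "(\<Sum>k<g. M s k * C k r) = matmul g B C s r" using False by (simp add: M_def matmul_def)
      also have "\<dots> = 0" using B_inv(1)[OF s r] False by (simp add: idmat_def)
      finally show ?thesis using False by simp
    qed
    have "(\<Sum>s<g. cofactor g M s i * (\<Sum>k<g. M s k * C k r))
        = (\<Sum>k<g. (\<Sum>s<g. cofactor g M s i * M s k) * C k r)"
      by (rule sum_swap_mult)
    also have "\<dots> = (\<Sum>k<g. (if i = k then rdet g M else 0) * C k r)"
    proof (rule sum.cong[OF refl])
      fix k assume "k \<in> {..<g}"
      then have k: "k < g" by simp
      show "(\<Sum>s<g. cofactor g M s i * M s k) * C k r = (if i = k then rdet g M else 0) * C k r"
        using col_expand[where M=M, OF rcM i k] by simp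
    qed
    also have "\<dots> = rdet g M * C i r" using i by (rule sum_if_mult)
    finally have e1: "(\<Sum>s<g. cofactor g M s i * (\<Sum>k<g. M s k * C k r)) = rdet g M * C i r" .
    have "(\<Sum>s<g. cofactor g M s i * (\<Sum>k<g. M s k * C k r))
        = (\<Sum>s<g. if s = r then cofactor g M s i * C j r else 0)"
      by (rule sum.cong[OF refl]) (simp add: inner)
    also have "\<dots> = \<Delta> r i * C j r" using r by (simp add: cofM)
    finally have e2: "\<Delta> r i * C j r = rdet g M * C i r" using e1 by simp
    obtain n where g: "g = Suc n" using r by (cases g) auto
    have "cofactor g M r j * 1 = (\<Sum>\<sigma>\<in>{\<sigma>. \<sigma> permutes {..<g}}. if \<sigma> r = j then of_int (sign \<sigma>) *
        prod_list (map (\<lambda>t. if t = r then 1 else M t (\<sigma> t)) [0..<g]) else 0)"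
      unfolding g by (rule cof_expand) (use r j g in auto)
    also have "\<dots> = rdet g M"
      unfolding rdet_def
    proof (rule sum.cong[OF refl])
      fix \<sigma> assume "\<sigma> \<in> {\<sigma>. \<sigma> permutes {..<g}}"
      show "(if \<sigma> r = j then of_int (sign \<sigma>) *
        prod_list (map (\<lambda>t. if t = r then 1 else M t (\<sigma> t)) [0..<g]) else 0)
        = of_int (sign \<sigma>) * prod_list (map (\<lambda>t. M t (\<sigma> t)) [0..<g])"
      proof (cases "\<sigma> r = j")
        case True
        have mm: "map (\<lambda>t. if t = r then 1 else M t (\<sigma> t)) [0..<g] = map (\<lambda>t. M t (\<sigma> t)) [0..<g]"
          using True by (auto simp: M_def idmat_def)
        show ?thesis by (simp only: True mm simp_thms(6) if_True)
      next
        case False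
        have "(0::'a) \<in> set (map (\<lambda>t. M t (\<sigma> t)) [0..<g])"
          using r False by (force simp: M_def idmat_def)
        then show ?thesis using False by (simp add: prod_list_zero_mem)
      qed
    qed
    finally have "rdet g M = \<Delta> r j" using cofM by simp
    then show ?thesis using e2 by simp
  qed
  have P3': "\<Delta> r i * Dinv * \<Delta> r j = \<Delta> r j * Dinv * \<Delta> r i"
    if r: "r < g" and i: "i < g" and j: "j < g" for r i j
    using P3[OF r i j] P1[OF j r] P1[OF i r] by (simp add: mult.assoc)
  have P2: "C i r * C j r = C j r * C i r" if i: "i < g" and j: "j < g" and r: "r < g" for i j r
  proof -
    have "C i r * C j r = Dinv * (\<Delta> r i * Dinv * \<Delta> r j)"
      using P1[OF i r] P1[OF j r] by (simp add: mult.assoc)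
    also have "\<dots> = Dinv * (\<Delta> r j * Dinv * \<Delta> r i)" using P3'[OF r i j] by simp
    also have "\<dots> = C j r * C i r"
      using P1[OF i r] P1[OF j r] by (simp add: mult.assoc)
    finally show ?thesis .
  qed
  show ?thesis using P1 P2 P3' unfolding \<Delta>_def by blast
qed

end
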